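(* Let $\alpha \ge 0$, $\beta > 0$, $d_v > 0$, $\bar x \in \mathbb{R}$, $\bar y \in \mathbb{R}$ and $x_{\max} > 0$, and set $C = \bar y^2 + d_v^2$. For $\tilde x \in \mathbb{R}$ let $\delta = \bar x - \tilde x$ and $$g(\tilde x) = \beta(\delta^2 + C) + \ln(\delta^2 + C) + 2\alpha \tilde x .$$ If $\beta d_v^2 \ge 1$, then $g$ is a strictly convex function of $\tilde x$ on the interval $[0, x_{\max}]$.
   Context: This is the negative logarithm of the normalized average received SNR $e^{-\beta[(\tilde x-\bar x)^2+C]}/\big([(\tilde x-\bar x)^2+C]e^{2\alpha\tilde x}\big)$ of a single pinching antenna at position $(\tilde x,0,d_v)$ on a waveguide along the $x$-axis serving a user at $(\bar x,\bar y,0)$, where $\alpha$ is the in-waveguide attenuation coefficient and $\beta$ the LoS blockage parameter. The feasible set of antenna positions is $[0,x_{\max}]$. *)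

theory Defs
  imports "HOL-Analysis.Analysis"
begin

definition strictly_convex_on :: "real set \<Rightarrow> (real \<Rightarrow> real) \<Rightarrow> bool" where
  "strictly_convex_on S f \<longleftrightarrow> convex S \<and>
     (\<forall>x\<in>S. \<forall>y\<in>S. \<forall>u::real. x \<noteq> y \<and> 0 < u \<and> u < 1 \<longrightarrow>
        f (u * x + (1 - u) * y) < u * f x + (1 - u) * f y)"

end

theory Submission
  imports Defs
begin

lemma qid: "u * (\<beta>/2 * ((xbar - x)^2 + C)) + (1 - u) * (\<beta>/2 * ((xbar - y)^2 + C)) - \<beta>/2 * ((xbar - (u * x + (1 - u) * y))^2 + C) = \<beta>/2 * (u * (1-u) * (x - y)^2)" for u \<beta> xbar x y C :: real
  by (simp add: field_simps power2_eq_square)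

lemma d2: "(xbar - x)^2 + C > (0::real) \<Longrightarrow> ((\<lambda>x. - \<beta> * (xbar - x) - 2*(xbar - x)/((xbar - x)^2 + C) + 2*\<alpha>) has_real_derivative
      (\<beta> + 2*(C - (xbar - x)^2)/((xbar - x)^2 + C)^2)) (at x)"
  apply (rule derivative_eq_intros refl | simp)+
  apply (simp add: divide_simps)
  apply (simp add: algebra_simps power2_eq_square)
  done

lemma h_convex:
  fixes \<beta> C xbar \<alpha> :: real
  assumes b: "\<beta> > 0" and c: "C > 0" and bc: "\<beta> * C \<ge> 1"
  shows "convex_on UNIV (\<lambda>x. \<beta>/2 * ((xbar - x)^2 + C) + ln ((xbar - x)^2 + C) + 2*\<alpha>*x)"
proof (rule f''_ge0_imp_convex[where f' = "\<lambda>x. - \<beta> * (xbar - x) - 2*(xbar - x)/((xbar - x)^2 + C) + 2*\<alpha>"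
      and f'' = "\<lambda>x. \<beta> + 2*(C - (xbar - x)^2)/((xbar - x)^2 + C)^2"])
  show "convex (UNIV::real set)" by simp
next
  fix x :: real
  have s: "(xbar - x)^2 + C > 0" using c by (simp add: add_nonneg_pos)
  show "((\<lambda>x. \<beta>/2 * ((xbar - x)^2 + C) + ln ((xbar - x)^2 + C) + 2*\<alpha>*x) has_real_derivative
      (- \<beta> * (xbar - x) - 2*(xbar - x)/((xbar - x)^2 + C) + 2*\<alpha>)) (at x)"
    using s by (auto intro!: derivative_eq_intros simp: field_simps power2_eq_square)
  show "((\<lambda>x. - \<beta> * (xbar - x) - 2*(xbar - x)/((xbar - x)^2 + C) + 2*\<alpha>) has_real_derivative
      (\<beta> + 2*(C - (xbar - x)^2)/((xbar - x)^2 + C)^2)) (at x)"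
    using s by (rule d2)
  define t where "t = (xbar - x)^2"
  have t0: "t \<ge> 0" unfolding t_def by simp
  have s2: "(t + C)^2 > 0" using s t_def by simp
  have key: "\<beta> * (t + C)^2 + 2*(C - t) \<ge> 0"
  proof -
    have "\<beta> * (t + C)^2 * C \<ge> (t+C)^2" using bc by (metis mult.commute mult_left_mono mult.right_neutral zero_le_power2 mult.assoc)
    hence "\<beta> * (t + C)^2 * C + 2*(C - t)*C \<ge> (t+C)^2 + 2*(C-t)*C" by simp
    moreover have "(t+C)^2 + 2*(C-t)*C = t^2 + 3*C^2" by (simp add: power2_eq_square algebra_simps)
    hence "(t+C)^2 + 2*(C-t)*C \<ge> 0" by simp
    ultimately have "(\<beta> * (t + C)^2 + 2*(C - t)) * C \<ge> 0" by (simp add: algebra_simps)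
    thus ?thesis using c by (simp add: zero_le_mult_iff)
  qed
  show "0 \<le> \<beta> + 2*(C - (xbar - x)^2)/((xbar - x)^2 + C)^2"
  proof -
    have "0 \<le> (\<beta> * (t + C)^2 + 2*(C - t)) / (t + C)^2" using key s2 by simp
    also have "... = \<beta> + 2*(C - t)/(t + C)^2" using s2 by (simp add: field_simps)
    finally show ?thesis unfolding t_def .
  qed
qed

theorem lemma1:
  fixes \<alpha> \<beta> d\<^sub>v xbar ybar xmax :: real
  assumes "\<alpha> \<ge> 0" and "\<beta> > 0" and "d\<^sub>v > 0" and "xmax > 0"
    and "\<beta> * d\<^sub>v ^ 2 \<ge> 1"
  shows "strictly_convex_on {0..xmax}
           (\<lambda>xt. let C = ybar ^ 2 + d\<^sub>v ^ 2; \<delta> = xbar - xt in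
                  \<beta> * (\<delta> ^ 2 + C) + ln (\<delta> ^ 2 + C) + 2 * \<alpha> * xt)"
proof -
  define C where "C = ybar ^ 2 + d\<^sub>v ^ 2"
  have c: "C > 0" unfolding C_def using assms(3) by (simp add: add_nonneg_pos)
  have bc: "\<beta> * C \<ge> 1"
  proof -
    have "\<beta> * d\<^sub>v ^ 2 \<le> \<beta> * C" unfolding C_def using assms(2) by simp
    thus ?thesis using assms(5) by linarith
  qed
  define h where "h = (\<lambda>x. \<beta>/2 * ((xbar - x)^2 + C) + ln ((xbar - x)^2 + C) + 2*\<alpha>*x)"
  define q where "q = (\<lambda>x::real. \<beta>/2 * ((xbar - x)^2 + C))"
  have hc: "convex_on UNIV h" unfolding h_def using h_convex[OF assms(2) c bc] .
  have eq: "(\<lambda>xt. let C = ybar ^ 2 + d\<^sub>v ^ 2; \<delta> = xbar - xt in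
                  \<beta> * (\<delta> ^ 2 + C) + ln (\<delta> ^ 2 + C) + 2 * \<alpha> * xt) = (\<lambda>x. h x + q x)"
    by (rule ext) (simp add: h_def q_def C_def Let_def algebra_simps)
  show ?thesis unfolding eq strictly_convex_on_def
  proof (intro conjI ballI allI impI)
    show "convex {0..xmax}" by simp
    fix x y u :: real
    assume H: "x \<noteq> y \<and> 0 < u \<and> u < 1"
    have h1: "h (u * x + (1 - u) * y) \<le> u * h x + (1 - u) * h y"
      using convex_onD[OF hc, of "1-u" x y] H by simp
    have "u * q x + (1 - u) * q y - q (u * x + (1 - u) * y) = \<beta>/2 * (u * (1-u) * (x - y)^2)"
      unfolding q_def by (rule qid)
    moreover have "\<beta>/2 * (u * (1-u) * (x - y)^2) > 0" using H assms(2) by simp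
    ultimately have "q (u * x + (1 - u) * y) < u * q x + (1 - u) * q y" by linarith
    with h1 show "h (u * x + (1 - u) * y) + q (u * x + (1 - u) * y)
        < u * (h x + q x) + (1 - u) * (h y + q y)" by (simp add: algebra_simps)
  qed
qed

end
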